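(* Suppose $\dim_{\mathbb{C}}N=n-m=4$, where $N=\mathrm{span}_{\mathbb{C}}\{I_{m+1},\dots,I_n\}$, and suppose that (1) $a_{m+1}=b_{m+1}=0$, and (2) $a_{m+2}=b_{m+2}=0$ or $a_{m+3}=b_{m+3}=0$. Then for every circle $C$ as described in the context, $\lambda:=\int_C\zeta^{-1}\,d\zeta=2\pi i$ (that is, $2\pi i$ times the unit of $\mathbb{A}_n^m$).
   Context: Fix natural numbers $m\le n$. $\mathbb{A}_n^m$ is a commutative associative algebra with unit over $\mathbb{C}$ with a basis $\{I_k\}_{k=1}^n$ satisfying: (1) for $r,s\in\{1,\dots,m\}$, $I_rI_s=0$ if $r\ne s$ and $I_rI_r=I_r$; (2) for $r,s\in\{m+1,\dots,n\}$, $I_rI_s=\sum_{k=\max\{r,s\}+1}^{n}\Upsilon^{s}_{r,k}I_k$ with constants $\Upsilon^s_{r,k}\in\mathbb{C}$; (3) for each $s\in\{m+1,\dots,n\}$ there is a unique $u_s\in\{1,\dots,m\}$ such that for $r\in\{1,\dots,m\}$, $I_rI_s=I_s$ if $r=u_s$ and $0$ otherwise. Unit $1=\sum_{u=1}^mI_u$; $\mathbb{A}_n^m=S\oplus_sN$ with $S=\mathrm{span}\{I_1,\dots,I_m\}$, $N=\mathrm{span}\{I_{m+1},\dots,I_n\}$. $f_u(\sum_k\lambda_kI_k)=\lambda_u$. Let $e_1=1$, $e_2=\sum_{k=1}^na_kI_k$, $e_3=\sum_{k=1}^nb_kI_k$ ($a_k,b_k\in\mathbb{C}$) be linearly independent over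 $\mathbb{R}$; $\zeta=xe_1+ye_2+ze_3$ ($x,y,z\in\mathbb{R}$), $E_3$ their real span. Standing assumption: $f_u(E_3)=\mathbb{C}$ for all $u=1,\dots,m$. $\zeta$ is non-invertible exactly when $(x,y,z)$ lies on one of the lines $L_u=\{x+y\,\mathrm{Re}\,a_u+z\,\mathrm{Re}\,b_u=0,\ y\,\mathrm{Im}\,a_u+z\,\mathrm{Im}\,b_u=0\}$. The circle: $C\subset E_3$ is $C=\{xe_1+ye_2+ze_3:(x,y,z)\in C'\}$ for a Euclidean circle $C'\subset\mathbb{R}^3$ of radius $R>0$ centered at the origin, such that for every $u$ the image $f_u(C)$ is a positively oriented closed Jordan curve in $\mathbb{C}$ bounding a domain containing $0$. Integral: for a Jordan rectifiable curve $\gamma$ and continuous $\Psi=\sum_k(U_k+iV_k)I_k$ on $\gamma_\zeta$, $\int_{\gamma_\zeta}\Psi d\zeta:=\sum_kI_k\int_\gamma(U_k+iV_k)dx+\sum_ke_2I_k\int_\gamma(U_k+iV_k)dy+\sum_ke_3I_k\int_\gamma(U_k+iV_k)dz$. *)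

theory Defs
  imports "HOL-Complex_Analysis.Complex_Analysis"
begin

text \<open>Elements of the algebra A_n^m are coefficient vectors x :: nat => complex,
  x k being the coefficient of the basis element I_k, supported on {1..n}.\<close>

definition A_elem :: "nat \<Rightarrow> (nat \<Rightarrow> complex) \<Rightarrow> bool" where
  "A_elem n x \<longleftrightarrow> (\<forall>k. k \<notin> {1..n} \<longrightarrow> x k = 0)"

definition elt :: "nat \<Rightarrow> (nat \<Rightarrow> complex) \<Rightarrow> nat \<Rightarrow> complex" where
  "elt n a = (\<lambda>k. if k \<in> {1..n} then a k else 0)"

text \<open>Product of basis elements I_r I_s (as coefficient vector, evaluated at k).
  Ups r s k stands for the constant Upsilon^s_{r,k}; u s stands for u_s.\<close>

definition bprod :: "nat \<Rightarrow> nat \<Rightarrow> (nat \<Rightarrow> nat \<Rightarrow> nat \<Rightarrow> complex) \<Rightarrow> (nat \<Rightarrow> nat)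
    \<Rightarrow> nat \<Rightarrow> nat \<Rightarrow> nat \<Rightarrow> complex" where
  "bprod m n Ups u r s k =
     (if r \<le> m \<and> s \<le> m then (if r = s \<and> k = r then 1 else 0)
      else if r \<le> m then (if r = u s \<and> k = s then 1 else 0)
      else if s \<le> m then (if s = u r \<and> k = r then 1 else 0)
      else if max r s < k \<and> k \<le> n then Ups r s k else 0)"

definition alg_mul :: "nat \<Rightarrow> nat \<Rightarrow> (nat \<Rightarrow> nat \<Rightarrow> nat \<Rightarrow> complex) \<Rightarrow> (nat \<Rightarrow> nat)
    \<Rightarrow> (nat \<Rightarrow> complex) \<Rightarrow> (nat \<Rightarrow> complex) \<Rightarrow> nat \<Rightarrow> complex" where
  "alg_mul m n Ups u x y =
     (\<lambda>k. \<Sum>r\<in>{1..n}. \<Sum>s\<in>{1..n}. x r * y s * bprod m n Ups u r s k)"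

definition is_Anm :: "nat \<Rightarrow> nat \<Rightarrow> (nat \<Rightarrow> nat \<Rightarrow> nat \<Rightarrow> complex) \<Rightarrow> (nat \<Rightarrow> nat) \<Rightarrow> bool" where
  "is_Anm m n Ups u \<longleftrightarrow>
     1 \<le> m \<and> m \<le> n \<and>
     (\<forall>s\<in>{m+1..n}. u s \<in> {1..m}) \<and>
     (\<forall>x y. A_elem n x \<longrightarrow> A_elem n y \<longrightarrow> alg_mul m n Ups u x y = alg_mul m n Ups u y x) \<and>
     (\<forall>x y z. A_elem n x \<longrightarrow> A_elem n y \<longrightarrow> A_elem n z \<longrightarrow>
        alg_mul m n Ups u (alg_mul m n Ups u x y) z = alg_mul m n Ups u x (alg_mul m n Ups u y z))"

definition A_one :: "nat \<Rightarrow> nat \<Rightarrow> complex" where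
  "A_one m = (\<lambda>k. if 1 \<le> k \<and> k \<le> m then 1 else 0)"

definition A_inv :: "nat \<Rightarrow> nat \<Rightarrow> (nat \<Rightarrow> nat \<Rightarrow> nat \<Rightarrow> complex) \<Rightarrow> (nat \<Rightarrow> nat)
    \<Rightarrow> (nat \<Rightarrow> complex) \<Rightarrow> nat \<Rightarrow> complex" where
  "A_inv m n Ups u x = (THE w. A_elem n w \<and> alg_mul m n Ups u x w = A_one m)"

text \<open>zeta = x e_1 + y e_2 + z e_3 with e_1 = 1, e_2 = sum a_k I_k, e_3 = sum b_k I_k.\<close>

definition zeta :: "nat \<Rightarrow> nat \<Rightarrow> (nat \<Rightarrow> complex) \<Rightarrow> (nat \<Rightarrow> complex)
    \<Rightarrow> real \<Rightarrow> real \<Rightarrow> real \<Rightarrow> nat \<Rightarrow> complex" where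
  "zeta m n a b x y z =
     (\<lambda>k. of_real x * A_one m k + of_real y * elt n a k + of_real z * elt n b k)"

definition zeta3 :: "nat \<Rightarrow> nat \<Rightarrow> (nat \<Rightarrow> complex) \<Rightarrow> (nat \<Rightarrow> complex)
    \<Rightarrow> real^3 \<Rightarrow> nat \<Rightarrow> complex" where
  "zeta3 m n a b P = zeta m n a b (P $ 1) (P $ 2) (P $ 3)"

text \<open>Standing assumptions: e_1, e_2, e_3 linearly independent over R, and f_u(E_3) = C.\<close>

definition standing_assms :: "nat \<Rightarrow> nat \<Rightarrow> (nat \<Rightarrow> complex) \<Rightarrow> (nat \<Rightarrow> complex) \<Rightarrow> bool" where
  "standing_assms m n a b \<longleftrightarrow>
     (\<forall>x y z. zeta m n a b x y z = (\<lambda>_. 0) \<longrightarrow> x = 0 \<and> y = 0 \<and> z = 0) \<and>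
     (\<forall>v\<in>{1..m}. \<forall>w::complex. \<exists>x y z::real.
        zeta m n a b x y z v = w)"

text \<open>The integral of Psi (a function on R^3 with values in A_n^m) along a path gamma
  in R^3 parametrized on [0,1], as defined in the paper:
  sum_k I_k int (Psi_k) dx + e_2 sum_k I_k int (Psi_k) dy + e_3 sum_k I_k int (Psi_k) dz.\<close>

definition coord_int :: "nat \<Rightarrow> (real \<Rightarrow> real^3) \<Rightarrow> (real^3 \<Rightarrow> nat \<Rightarrow> complex) \<Rightarrow> 3
    \<Rightarrow> nat \<Rightarrow> complex" where
  "coord_int n \<gamma> \<Psi> i = (\<lambda>k. if k \<in> {1..n} then
      integral {0..1} (\<lambda>t. \<Psi> (\<gamma> t) k * of_real (vector_derivative (\<lambda>s. \<gamma> s $ i) (at t)))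
      else 0)"

definition alg_line_integral :: "nat \<Rightarrow> nat \<Rightarrow> (nat \<Rightarrow> nat \<Rightarrow> nat \<Rightarrow> complex) \<Rightarrow> (nat \<Rightarrow> nat)
    \<Rightarrow> (nat \<Rightarrow> complex) \<Rightarrow> (nat \<Rightarrow> complex) \<Rightarrow> (real \<Rightarrow> real^3) \<Rightarrow> (real^3 \<Rightarrow> nat \<Rightarrow> complex)
    \<Rightarrow> nat \<Rightarrow> complex" where
  "alg_line_integral m n Ups u a b \<gamma> \<Psi> =
     (\<lambda>k. coord_int n \<gamma> \<Psi> 1 k
          + alg_mul m n Ups u (elt n a) (coord_int n \<gamma> \<Psi> 2) k
          + alg_mul m n Ups u (elt n b) (coord_int n \<gamma> \<Psi> 3) k)"

text \<open>Circle C' of radius R centred at the origin of R^3, spanned by orthonormal p, q,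
  parametrized on [0,1] (the orientation is encoded by the order of p and q).\<close>

definition circ :: "real \<Rightarrow> real^3 \<Rightarrow> real^3 \<Rightarrow> real \<Rightarrow> real^3" where
  "circ R p q t = R *\<^sub>R (cos (2 * pi * t) *\<^sub>R p + sin (2 * pi * t) *\<^sub>R q)"

text \<open>The admissibility condition on the circle: for every u, f_u(C) is a positively
  oriented closed Jordan curve bounding a domain containing 0.\<close>

definition admissible_circle :: "nat \<Rightarrow> nat \<Rightarrow> (nat \<Rightarrow> complex) \<Rightarrow> (nat \<Rightarrow> complex)
    \<Rightarrow> real \<Rightarrow> real^3 \<Rightarrow> real^3 \<Rightarrow> bool" where
  "admissible_circle m n a b R p q \<longleftrightarrow>
     R > 0 \<and> norm p = 1 \<and> norm q = 1 \<and> inner p q = 0 \<and>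
     (\<forall>v\<in>{1..m}. let g = (\<lambda>t. zeta3 m n a b (circ R p q t) v) in
        simple_path g \<and> pathfinish g = pathstart g \<and>
        0 \<in> inside (path_image g) \<and> winding_number g 0 = 1)"

end

theory Submission
  imports Defs
begin
lemma delta2:
  assumes "finite A" "finite B"
  shows "(\<Sum>r\<in>A. \<Sum>s\<in>B. if r = a \<and> s = b then f r s else 0) = (if a\<in>A \<and> b\<in>B then (f a b :: 'a::comm_monoid_add) else 0)"
proof -
  have "(\<Sum>r\<in>A. \<Sum>s\<in>B. if r = a \<and> s = b then f r s else 0) = (\<Sum>r\<in>A. if r = a then (\<Sum>s\<in>B. if s = b then f r s else 0) else 0)"
    by (intro sum.cong refl) auto
  also have "\<dots> = (if a\<in>A \<and> b\<in>B then f a b else 0)"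
    using assms by (simp add: sum.delta')
  finally show ?thesis .
qed
lemma restr2:
  assumes "finite A" "C \<subseteq> A"
  shows "(\<Sum>r\<in>A. \<Sum>s\<in>A. if r \<in> C then (if s \<in> C then f r s else 0) else 0) = (\<Sum>r\<in>C. \<Sum>s\<in>C. (f r s :: 'a::comm_monoid_add))"
proof -
  have "(\<Sum>r\<in>A. \<Sum>s\<in>A. if r \<in> C then (if s \<in> C then f r s else 0) else 0) = (\<Sum>r\<in>A. if r \<in> C then (\<Sum>s\<in>A. if s \<in> C then f r s else 0) else 0)"
    by (intro sum.cong refl) auto
  also have "\<dots> = (\<Sum>r\<in>C. \<Sum>s\<in>A. if s \<in> C then f r s else 0)"
    using assms by (simp add: sum.If_cases Int_absorb1)
  also have "\<dots> = (\<Sum>r\<in>C. \<Sum>s\<in>C. f r s)"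
    using assms by (simp add: sum.If_cases Int_absorb1)
  finally show ?thesis .
qed

lemma pw3: "(X::complex) * ((if P then 1 else 0) + (if Q then 1 else 0) + (if R then U else 0)) = 
  (if P then X else 0) + (if Q then X else 0) + (if R then X*U else 0)"
  by (simp add: distrib_left)

lemma bprod_hi:
  assumes "m < k" "k \<le> n" "c = u k" "c \<in> {1..m}"
  shows "bprod m n Ups u r s k = (if r = c \<and> s = k then 1 else 0) + (if r = k \<and> s = c then 1 else 0)
     + (if m < r \<and> m < s \<and> r < k \<and> s < k then Ups r s k else 0)"
  using assms by (auto simp: bprod_def)

lemma bprod_lo:
  assumes "1 \<le> k" "k \<le> m"
  shows "bprod m n Ups u r s k = (if r = k \<and> s = k then 1 else 0)"
  using assms by (auto simp: bprod_def)

lemma mul_hi: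
  assumes "m < k" "k \<le> n" "u k \<in> {1..m}"
  shows "alg_mul m n Ups u x y k = x (u k) * y k + x k * y (u k)
     + (\<Sum>r\<in>{m<..<k}. \<Sum>s\<in>{m<..<k}. x r * y s * Ups r s k)"
proof -
  obtain c where c: "c = u k" "c \<in> {1..m}" using assms by auto
  have "alg_mul m n Ups u x y k = (\<Sum>r\<in>{1..n}. \<Sum>s\<in>{1..n}.
      (if r = c \<and> s = k then x r * y s else 0) + (if r = k \<and> s = c then x r * y s else 0)
     + (if m < r \<and> m < s \<and> r < k \<and> s < k then x r * y s * Ups r s k else 0))"
    unfolding alg_mul_def
    by (intro sum.cong refl, subst bprod_hi[of m k n c u Ups, OF assms(1,2) c], rule pw3)
  also have "\<dots> = (\<Sum>r\<in>{1..n}. \<Sum>s\<in>{1..n}.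
      (if r = c \<and> s = k then x r * y s else 0) + (if r = k \<and> s = c then x r * y s else 0)
     + (if r \<in> {m<..<k} then (if s \<in> {m<..<k} then x r * y s * Ups r s k else 0) else 0))"
    by (intro sum.cong refl) auto
  also have "\<dots> = x c * y k + x k * y c
     + (\<Sum>r\<in>{m<..<k}. \<Sum>s\<in>{m<..<k}. x r * y s * Ups r s k)"
  proof -
    have f: "{m<..<k} \<subseteq> {Suc 0..n}" using assms by auto
    show ?thesis using assms c
      by (simp add: sum.distrib delta2 restr2[OF _ f] del: greaterThanLessThan_iff)
  qed
  finally show ?thesis using c by simp
qed

lemma mul_lo:
  assumes "1 \<le> k" "k \<le> m" "m \<le> n"
  shows "alg_mul m n Ups u x y k = x k * y k"
proof -
  have "alg_mul m n Ups u x y k = (\<Sum>r\<in>{1..n}. \<Sum>s\<in>{1..n}. if r = k \<and> s = k then x r * y s else 0)"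
    unfolding alg_mul_def bprod_lo[OF assms(1,2)] by (intro sum.cong refl) auto
  also have "\<dots> = x k * y k" using assms by (simp add: delta2)
  finally show ?thesis .
qed

lemma mul_out:
  assumes "k = 0 \<or> n < k" "\<forall>s\<in>{m+1..n}. u s \<in> {1..m}"
  shows "alg_mul m n Ups u x y k = 0"
  unfolding alg_mul_def
  by (intro sum.neutral ballI) (use assms in \<open>auto simp: bprod_def\<close>)

definition dl :: "nat \<Rightarrow> nat \<Rightarrow> complex" where "dl i = (\<lambda>k. if k = i then 1 else 0)"

lemma dl_sum2:
  assumes "finite A"
  shows "(\<Sum>r'\<in>A. \<Sum>s'\<in>A. dl r r' * dl s s' * f r' s') = (if r \<in> A \<and> s \<in> A then f r s else 0)"
proof -
  have "(\<Sum>r'\<in>A. \<Sum>s'\<in>A. dl r r' * dl s s' * f r' s') = (\<Sum>r'\<in>A. \<Sum>s'\<in>A. if r' = r \<and> s' = s then f r' s' else 0)"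
    by (intro sum.cong refl) (auto simp: dl_def)
  then show ?thesis using assms by (simp add: delta2)
qed

lemma dl_sum2_zero:
  assumes "\<forall>r'\<in>A. dl r r' = 0"
  shows "(\<Sum>r'\<in>A. \<Sum>s'\<in>A. dl r r' * y s' * f r' s') = 0"
  using assms by simp

lemma mul_lin3: "alg_mul m n U u x (\<lambda>s. c1 * y1 s + c2 * y2 s + c3 * y3 s) k
   = c1 * alg_mul m n U u x y1 k + c2 * alg_mul m n U u x y2 k + c3 * alg_mul m n U u x y3 k"
  by (simp add: alg_mul_def sum_distrib_left sum.distrib algebra_simps)

lemma mul_scal: "alg_mul m n U u x (\<lambda>s. y s * c) k = c * alg_mul m n U u x y k"
  by (simp add: alg_mul_def sum_distrib_left algebra_simps)

lemma mul_hasint: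
  assumes "\<And>s. s \<in> {1..n} \<Longrightarrow> (f s has_integral I s) S"
  shows "((\<lambda>t. alg_mul m n U u x (\<lambda>s. f s t) k) has_integral alg_mul m n U u x I k) S"
  unfolding alg_mul_def
  by (intro has_integral_sum finite_atLeastAtMost has_integral_mult_left has_integral_mult_right assms)

lemma vd_div:
  fixes f g :: "real \<Rightarrow> complex"
  assumes f: "(f has_vector_derivative f') (at t within S)" and g: "(g has_vector_derivative g') (at t within S)"
    and nz: "g t \<noteq> 0"
  shows "((\<lambda>t. f t / g t) has_vector_derivative ((f' * g t - f t * g') / (g t * g t))) (at t within S)"
proof -
  have "((\<lambda>x. f x / g x) has_derivative (\<lambda>h. (h *\<^sub>R f' * g t - f t * (h *\<^sub>R g')) / (g t * g t))) (at t within S)"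
    using has_derivative_divide'[OF f[unfolded has_vector_derivative_def] g[unfolded has_vector_derivative_def] nz] .
  moreover have "(\<lambda>h. (h *\<^sub>R f' * g t - f t * (h *\<^sub>R g')) / (g t * g t)) = (\<lambda>h. h *\<^sub>R ((f' * g t - f t * g') / (g t * g t)))"
    by (intro ext) (simp add: scaleR_conv_of_real algebra_simps diff_divide_distrib)
  ultimately show ?thesis unfolding has_vector_derivative_def by simp
qed

lemma ftc0:
  fixes F :: "real \<Rightarrow> complex"
  assumes "\<And>t. t \<in> {0..1} \<Longrightarrow> (F has_vector_derivative f t) (at t within {0..1})" and "F 1 = F 0"
  shows "(f has_integral 0) {0..1}"
  using fundamental_theorem_of_calculus[of 0 1 F f] assms by simp

locale anm =
  fixes m n :: nat and Ups :: "nat \<Rightarrow> nat \<Rightarrow> nat \<Rightarrow> complex" and u :: "nat \<Rightarrow> nat"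
  assumes alg: "is_Anm m n Ups u" and dim: "n = m + 4"
begin

abbreviation mul where "mul \<equiv> alg_mul m n Ups u"

lemma m1: "1 \<le> m" and mn: "m \<le> n" and urange: "\<forall>s\<in>{m+1..n}. u s \<in> {1..m}"
  and comm: "\<And>x y. A_elem n x \<Longrightarrow> A_elem n y \<Longrightarrow> mul x y = mul y x"
  and assoc: "\<And>x y z. A_elem n x \<Longrightarrow> A_elem n y \<Longrightarrow> A_elem n z \<Longrightarrow> mul (mul x y) z = mul x (mul y z)"
  using alg unfolding is_Anm_def by auto

lemma urng: "m < k \<Longrightarrow> k \<le> n \<Longrightarrow> u k \<in> {1..m}"
  using urange[rule_format, of k] by auto

lemma mulhi: "m < k \<Longrightarrow> k \<le> n \<Longrightarrow> mul x y k = x (u k) * y k + x k * y (u k)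
     + (\<Sum>r\<in>{m<..<k}. \<Sum>s\<in>{m<..<k}. x r * y s * Ups r s k)"
  using mul_hi urng by blast

lemma mullo: "1 \<le> k \<Longrightarrow> k \<le> m \<Longrightarrow> mul x y k = x k * y k"
  using mul_lo mn by blast

lemma mulout: "k = 0 \<or> n < k \<Longrightarrow> mul x y k = 0"
  using mul_out urange by blast

lemma A_elem_dl: "i \<in> {1..n} \<Longrightarrow> A_elem n (dl i)"
  by (auto simp: A_elem_def dl_def)

lemma mul_dl_dl:
  assumes "m < r" "m < s" "r < k" "s < k" "k \<le> n"
  shows "mul (dl r) (dl s) k = Ups r s k"
proof -
  have "dl r (u k) = 0" "dl s k = 0" "dl r k = 0" using urng[of k] assms by (auto simp: dl_def)
  then show ?thesis using assms by (simp add: mulhi dl_sum2)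
qed

lemma Ups_comm:
  assumes "m < r" "m < s" "r < k" "s < k" "k \<le> n"
  shows "Ups r s k = Ups s r k"
  using mul_dl_dl[OF assms] mul_dl_dl[of s r k] comm[OF A_elem_dl A_elem_dl, of r s] assms by auto

lemma mul_dl_u:
  assumes "m < r" "r \<le> n"
  shows "mul (dl (u r)) (dl r) = dl r"
proof
  fix k
  have ur: "u r \<in> {1..m}" using urng assms by auto
  consider "1 \<le> k \<and> k \<le> m" | "m < k \<and> k \<le> n" | "k = 0 \<or> n < k" by linarith
  then show "mul (dl (u r)) (dl r) k = dl r k"
  proof cases
    case 1 then show ?thesis using assms by (simp add: mullo dl_def)
  next
    case 2
    have z: "\<forall>r'\<in>{m<..<k}. dl (u r) r' = 0" using ur by (auto simp: dl_def)
    have "mul (dl (u r)) (dl r) k = dl (u r) (u k) * dl r k + dl (u r) k * dl r (u k)"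
      using 2 by (simp add: mulhi z)
    also have "\<dots> = dl r k" using 2 ur by (auto simp: dl_def)
    finally show ?thesis .
  next
    case 3 then show ?thesis using assms by (auto simp: mulout dl_def)
  qed
qed

lemma Ups_assoc:
  assumes "m < r" "m < s" "r < k" "s < k" "k \<le> n" "Ups r s k \<noteq> 0"
  shows "u r = u k"
proof -
  have ur: "u r \<in> {1..m}" using urng assms by auto
  have e1: "A_elem n (dl (u r))" "A_elem n (dl r)" "A_elem n (dl s)"
    using ur assms mn by (auto intro!: A_elem_dl)
  have "mul (mul (dl (u r)) (dl r)) (dl s) k = Ups r s k"
    using assms by (simp add: mul_dl_u mul_dl_dl)
  moreover have "mul (dl (u r)) (mul (dl r) (dl s)) k = dl (u r) (u k) * Ups r s k"
  proof -
    have z: "\<forall>r'\<in>{m<..<k}. dl (u r) r' = 0" using ur by (auto simp: dl_def)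
    have "dl (u r) k = 0" using ur assms by (auto simp: dl_def)
    moreover have "mul (dl r) (dl s) k = Ups r s k" using assms(1-5) by (rule mul_dl_dl)
    moreover have "mul (dl (u r)) (mul (dl r) (dl s)) k = dl (u r) (u k) * mul (dl r) (dl s) k
       + dl (u r) k * mul (dl r) (dl s) (u k) + (\<Sum>r'\<in>{m<..<k}. \<Sum>s'\<in>{m<..<k}. dl (u r) r' * mul (dl r) (dl s) s' * Ups r' s' k)"
      using assms by (intro mulhi) auto
    ultimately show ?thesis using z by simp
  qed
  ultimately have "Ups r s k = dl (u r) (u k) * Ups r s k" using assoc[OF e1] by simp
  then show ?thesis using assms(6) by (auto simp: dl_def split: if_splits)
qed

lemma A_elem_one: "A_elem n (A_one m)"
  using mn by (auto simp: A_elem_def A_one_def)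

lemma mul_one:
  assumes "A_elem n x"
  shows "mul x (A_one m) = x"
proof
  fix k
  consider "1 \<le> k \<and> k \<le> m" | "m < k \<and> k \<le> n" | "k = 0 \<or> n < k" by linarith
  then show "mul x (A_one m) k = x k"
  proof cases
    case 1 then show ?thesis by (simp add: mullo A_one_def)
  next
    case 2
    have z: "\<And>s. s\<in>{m<..<k} \<Longrightarrow> A_one m s = 0" by (auto simp: A_one_def)
    show ?thesis using 2 urng[of k] by (simp add: mulhi z A_one_def)
  next
    case 3 then show ?thesis using assms by (auto simp: mulout A_elem_def)
  qed
qed

lemma inv_unique:
  assumes "A_elem n z" "A_elem n w" "mul z w = A_one m"
  shows "A_inv m n Ups u z = w"
  unfolding A_inv_def
proof (rule the_equality)
  show "A_elem n w \<and> mul z w = A_one m" using assms by simp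
next
  fix w' assume h: "A_elem n w' \<and> mul z w' = A_one m"
  have "w' = mul w' (A_one m)" using h mul_one by simp
  also have "\<dots> = mul w' (mul z w)" using assms by simp
  also have "\<dots> = mul (mul w' z) w" using assoc h assms by simp
  also have "\<dots> = mul (mul z w') w" using comm h assms by metis
  also have "\<dots> = w" using h comm[OF assms(2) A_elem_one] mul_one[OF assms(2)] by simp
  finally show "w' = w" .
qed

end

context anm begin

lemma ival1: "{m<..<m+1} = {}" and ival2: "{m<..<m+2} = {m+1}" and ival3: "{m<..<m+3} = {m+1,m+2}"
  and ival4: "{m<..<m+4} = {m+1,m+2,m+3}" by auto

lemma cr: "u (m+1) \<in> {1..m}" "u (m+2) \<in> {1..m}" "u (m+3) \<in> {1..m}" "u (m+4) \<in> {1..m}"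
  using urng dim by auto

definition winv :: "(nat \<Rightarrow> complex) \<Rightarrow> nat \<Rightarrow> complex" where
  "winv Z = (let s2 = Z (u (m+2)); s3 = Z (u (m+3)); s4 = Z (u (m+4));
     w2 = - Z (m+2) / s2^2;
     w3 = - Z (m+3) / s3^2 + Z (m+2)^2 * Ups (m+2) (m+2) (m+3) / (s2^2 * s3);
     w4 = - Z (m+4) / s4^2 - (Z (m+2) * w2 * Ups (m+2) (m+2) (m+4) + Z (m+2) * w3 * Ups (m+2) (m+3) (m+4)
            + Z (m+3) * w2 * Ups (m+3) (m+2) (m+4) + Z (m+3) * w3 * Ups (m+3) (m+3) (m+4)) / s4
   in (\<lambda>k. if k \<in> {1..m} then 1 / Z k else if k = m+2 then w2 else if k = m+3 then w3
          else if k = m+4 then w4 else 0))"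

lemma winv_elem: "A_elem n (winv Z)"
  using dim by (auto simp: A_elem_def winv_def Let_def)

lemma winv_mul:
  assumes Z1: "Z (m+1) = 0" and nz: "\<And>j. j \<in> {1..m} \<Longrightarrow> Z j \<noteq> 0"
  shows "mul Z (winv Z) = A_one m"
proof
  fix k
  have c: "u (m+1) \<in> {1..m}" "u (m+2) \<in> {1..m}" "u (m+3) \<in> {1..m}" "u (m+4) \<in> {1..m}" by (rule cr)+
  have nzc: "Z (u (m+2)) \<noteq> 0" "Z (u (m+3)) \<noteq> 0" "Z (u (m+4)) \<noteq> 0" using c nz by auto
  have w1: "winv Z (m+1) = 0" and wc: "\<And>j. j \<in> {1..m} \<Longrightarrow> winv Z j = 1 / Z j"
    by (auto simp: winv_def Let_def)
  have w2: "winv Z (m+2) = - Z (m+2) / Z (u (m+2))^2" by (simp add: winv_def Let_def)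
  have w3: "winv Z (m+3) = - Z (m+3) / Z (u (m+3))^2 + Z (m+2)^2 * Ups (m+2) (m+2) (m+3) / (Z (u (m+2))^2 * Z (u (m+3)))"
    by (simp add: winv_def Let_def)
  have w4: "winv Z (m+4) = - Z (m+4) / Z (u (m+4))^2 - (Z (m+2) * winv Z (m+2) * Ups (m+2) (m+2) (m+4) + Z (m+2) * winv Z (m+3) * Ups (m+2) (m+3) (m+4)
            + Z (m+3) * winv Z (m+2) * Ups (m+3) (m+2) (m+4) + Z (m+3) * winv Z (m+3) * Ups (m+3) (m+3) (m+4)) / Z (u (m+4))"
    by (simp add: winv_def Let_def)
  have mh: "mul Z (winv Z) (m+j) = Z (u(m+j)) * winv Z (m+j) + Z (m+j) * winv Z (u (m+j))
     + (\<Sum>r\<in>{m<..<m+j}. \<Sum>s\<in>{m<..<m+j}. Z r * winv Z s * Ups r s (m+j))" if "j \<in> {1..4}" for j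
    by (rule mulhi) (use that dim in auto)
  consider "k \<in> {1..m}" | "k = m+1" | "k = m+2" | "k = m+3" | "k = m+4" | "k = 0 \<or> n < k"
    using dim by force
  then show "mul Z (winv Z) k = A_one m k"
  proof cases
    case 1 then show ?thesis using nz[OF 1] by (simp add: mullo wc A_one_def)
  next
    case 2
    have "mul Z (winv Z) (m+1) = Z (u (m+1)) * winv Z (m+1) + Z (m+1) * winv Z (u (m+1))"
      using mh[of 1] unfolding ival1 by simp
    then show ?thesis using 2 w1 Z1 by (simp add: A_one_def)
  next
    case 3 
    have "mul Z (winv Z) (m+2) = Z (u (m+2)) * winv Z (m+2) + Z (m+2) * winv Z (u (m+2))"
      using mh[of 2] Z1 unfolding ival2 by simp
    also have "\<dots> = 0" using nzc c unfolding w2 wc[OF c(2)] by (simp add: power2_eq_square)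
    finally show ?thesis using 3 by (simp add: A_one_def)
  next
    case 4
    have "mul Z (winv Z) (m+3) = Z (u (m+3)) * winv Z (m+3) + Z (m+3) * winv Z (u (m+3)) + Z (m+2) * winv Z (m+2) * Ups (m+2) (m+2) (m+3)"
      using mh[of 3] Z1 w1 unfolding ival3 by simp
    also have "\<dots> = 0" using nzc c unfolding w3 w2 wc[OF c(3)] by (simp add: field_simps power2_eq_square)
    finally show ?thesis using 4 by (simp add: A_one_def)
  next
    case 5
    have "mul Z (winv Z) (m+4) = Z (u (m+4)) * winv Z (m+4) + Z (m+4) * winv Z (u (m+4)) + 
       (Z (m+2) * winv Z (m+2) * Ups (m+2) (m+2) (m+4) + Z (m+2) * winv Z (m+3) * Ups (m+2) (m+3) (m+4)
            + Z (m+3) * winv Z (m+2) * Ups (m+3) (m+2) (m+4) + Z (m+3) * winv Z (m+3) * Ups (m+3) (m+3) (m+4))"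
      using mh[of 4] Z1 w1 unfolding ival4 by (simp add: algebra_simps)
    also have "\<dots> = 0" using nzc c 
      unfolding w4 wc[OF c(4)] by (simp add: field_simps power2_eq_square)
    finally show ?thesis using 5 by (simp add: A_one_def)
  next
    case 6 then show ?thesis using mn by (auto simp: mulout A_one_def)
  qed
qed

end

locale circ_set = anm +
  fixes a b :: "nat \<Rightarrow> complex" and R :: real and p q :: "real^3"
  assumes adm: "admissible_circle m n a b R p q" and h1: "a (m+1) = 0" "b (m+1) = 0"
begin

definition Dr :: "3 \<Rightarrow> real \<Rightarrow> real" where
  "Dr i t = R * (2*pi*cos(2*pi*t) * (q$i) - 2*pi* sin(2*pi*t) * (p$i))"

definition xi :: "nat \<Rightarrow> real \<Rightarrow> complex" where
  "xi k t = zeta3 m n a b (circ R p q t) k"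

definition xid :: "nat \<Rightarrow> real \<Rightarrow> complex" where
  "xid k t = of_real(Dr 1 t)*A_one m k + of_real(Dr 2 t)*elt n a k + of_real(Dr 3 t)*elt n b k"

lemma circ_comp: "circ R p q t $ i = R*(cos(2*pi*t) * (p$i) + sin(2*pi*t)*(q$i))"
  by (simp add: circ_def)

lemma circ_deriv: "((\<lambda>s. circ R p q s $ i) has_real_derivative Dr i t) (at t within S)"
  unfolding circ_comp Dr_def
  by (rule derivative_eq_intros refl)+ (simp add: algebra_simps)

lemma circ_vd: "vector_derivative (\<lambda>s. circ R p q s $ i) (at t) = Dr i t"
  using circ_deriv[of i t UNIV]
  by (simp add: vector_derivative_at has_real_derivative_iff_has_vector_derivative)

lemma xi_eq: "xi k t = of_real(circ R p q t $ 1)*A_one m k + of_real(circ R p q t $ 2)*elt n a k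
   + of_real(circ R p q t $ 3)*elt n b k"
  by (simp add: xi_def zeta3_def zeta_def)

lemma xi_deriv: "((\<lambda>t. xi k t) has_vector_derivative xid k t) (at t within S)"
  unfolding xi_eq xid_def
  by (intro has_vector_derivative_add has_vector_derivative_mult_left has_vector_derivative_of_real circ_deriv)

lemma xi_cont: "continuous_on S (xi k)"
  using xi_deriv by (meson continuous_on_vector_derivative)

lemma Dr_cont: "continuous_on S (Dr i)"
  unfolding Dr_def by (intro continuous_intros)

lemma xid_cont: "continuous_on S (xid k)"
  unfolding xid_def by (intro continuous_intros continuous_on_of_real Dr_cont)

lemma xi_per: "xi k 1 = xi k 0"
  unfolding xi_eq circ_comp by simp

lemma adm_v: "v \<in> {1..m} \<Longrightarrow> simple_path (xi v) \<and> 0 \<in> inside (path_image (xi v)) \<and> winding_number (xi v) 0 = 1"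
  using adm unfolding admissible_circle_def Let_def xi_def[abs_def] by auto

lemma xi_nz: "v \<in> {1..m} \<Longrightarrow> t \<in> {0..1} \<Longrightarrow> xi v t \<noteq> 0"
proof
  assume v: "v \<in> {1..m}" and t: "t \<in> {0..1}" and z: "xi v t = 0"
  have "0 \<in> path_image (xi v)" using t z unfolding path_image_def by force
  then show False using adm_v[OF v] inside_no_overlap by blast
qed

lemma valid_xi: "valid_path (xi v)"
  unfolding valid_path_def
proof (rule C1_differentiable_imp_piecewise)
  show "xi v C1_differentiable_on {0..1}"
    unfolding C1_differentiable_on_def using xi_deriv xid_cont by blast
qed

lemma wind:
  assumes v: "v \<in> {1..m}"
  shows "((\<lambda>t. xid v t / xi v t) has_integral (2*pi*\<i>)) {0..1}"
proof -
  have nz: "0 \<notin> path_image (xi v)"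
    using adm_v[OF v] inside_no_overlap by blast
  have "((\<lambda>w. 1/(w - 0)) has_contour_integral (2*pi*\<i>*winding_number (xi v) 0)) (xi v)"
    by (rule has_contour_integral_winding_number[OF valid_xi nz])
  then have h: "((\<lambda>t. 1/(xi v t - 0) * vector_derivative (xi v) (at t within {0..1})) has_integral (2*pi*\<i>*winding_number (xi v) 0)) {0..1}"
    unfolding has_contour_integral_def .
  have "((\<lambda>t. xid v t / xi v t) has_integral (2*pi*\<i>*winding_number (xi v) 0)) {0..1}"
  proof (rule has_integral_cong[THEN iffD1, OF _ h])
    fix t :: real assume "t \<in> {0..1}"
    then have "vector_derivative (xi v) (at t within {0..1}) = xid v t"
      by (intro vector_derivative_at_within_ivl[OF xi_deriv]) auto
    then show "1/(xi v t - 0) * vector_derivative (xi v) (at t within {0..1}) = xid v t / xi v t"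
      by simp
  qed
  then show ?thesis using adm_v[OF v] by simp
qed


definition W :: "real \<Rightarrow> nat \<Rightarrow> complex" where
  "W t = A_inv m n Ups u (\<lambda>k. xi k t)"

lemma xi_elem: "A_elem n (\<lambda>k. xi k t)"
  using mn by (auto simp: A_elem_def xi_eq A_one_def elt_def)

lemma xi_m1: "xi (m+1) t = 0"
proof -
  have "m+1 \<le> n" using dim by simp
  then show ?thesis using h1 by (simp add: xi_eq A_one_def elt_def)
qed

lemma W_eq: "t \<in> {0..1} \<Longrightarrow> W t = winv (\<lambda>k. xi k t)"
  unfolding W_def by (rule inv_unique[OF xi_elem winv_elem winv_mul]) (use xi_m1 xi_nz in auto)

lemma W_elem: "t \<in> {0..1} \<Longrightarrow> A_elem n (W t)"
  using W_eq winv_elem by simp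

lemma winv_cont: "continuous_on {0..1} (\<lambda>t. winv (\<lambda>k. xi k t) s)"
proof -
  have c: "u (m+2) \<in> {1..m}" "u (m+3) \<in> {1..m}" "u (m+4) \<in> {1..m}" by (rule cr)+
  have nz: "\<forall>t\<in>{0..1}. xi (u (m+j)) t \<noteq> 0" if "u (m+j) \<in> {1..m}" for j using xi_nz that by blast
  note xc = xi_cont[of "{0..1}"]
  consider "s \<in> {1..m}" | "s \<notin> {1..m}" "s = m+2" | "s \<notin> {1..m}" "s = m+3" | "s \<notin> {1..m}" "s = m+4"
    | "s \<notin> {1..m}" "s \<noteq> m+2" "s \<noteq> m+3" "s \<noteq> m+4" by blast
  then show ?thesis
  proof cases
    case 1 then show ?thesis unfolding winv_def Let_def using xi_nz
      by (auto intro!: continuous_intros xc)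
  next
    case 2 then show ?thesis unfolding winv_def Let_def using nz[OF c(1)]
      by (auto intro!: continuous_intros xc)
  next
    case 3 then show ?thesis unfolding winv_def Let_def using nz[OF c(1)] nz[OF c(2)]
      by (auto intro!: continuous_intros xc)
  next
    case 4 then show ?thesis unfolding winv_def Let_def using nz[OF c(1)] nz[OF c(2)] nz[OF c(3)]
      by (auto intro!: continuous_intros xc)
  next
    case 5 then show ?thesis unfolding winv_def Let_def by auto
  qed
qed

lemma W_cont: "continuous_on {0..1} (\<lambda>t. W t s)"
  using winv_cont by (rule continuous_on_eq) (simp add: W_eq)

lemma coord_hasint:
  assumes "s \<in> {1..n}"
  shows "((\<lambda>t. W t s * of_real (Dr i t)) has_integral
     coord_int n (circ R p q) (\<lambda>P. A_inv m n Ups u (zeta3 m n a b P)) i s) {0..1}"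
proof -
  have e: "zeta3 m n a b (circ R p q t) = (\<lambda>k. xi k t)" for t by (simp add: xi_def)
  have "(\<lambda>t. W t s * of_real (Dr i t)) integrable_on {0..1}"
    by (intro integrable_continuous_interval continuous_intros W_cont Dr_cont)
  then show ?thesis using assms
    by (simp add: coord_int_def circ_vd e W_def[symmetric] has_integral_integral)
qed

lemma line_int:
  "((\<lambda>t. mul (W t) (\<lambda>s. xid s t) k) has_integral
      alg_line_integral m n Ups u a b (circ R p q) (\<lambda>P. A_inv m n Ups u (zeta3 m n a b P)) k) {0..1}"
proof -
  let ?C = "coord_int n (circ R p q) (\<lambda>P. A_inv m n Ups u (zeta3 m n a b P))"
  have i1: "((\<lambda>t. if k \<in> {1..n} then W t k * of_real (Dr 1 t) else 0) has_integral ?C 1 k) {0..1}"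
  proof (cases "k \<in> {1..n}")
    case True then show ?thesis using coord_hasint by simp
  next
    case False
    then have "(\<lambda>t. if k \<in> {1..n} then W t k * of_real (Dr 1 t) else 0) = (\<lambda>t. 0)" by (intro ext) (simp only: if_False)
    moreover have "?C 1 k = 0" unfolding coord_int_def using False by auto
    ultimately show ?thesis by simp
  qed
  have i2: "((\<lambda>t. mul (elt n a) (\<lambda>s. W t s * of_real (Dr 2 t)) k) has_integral mul (elt n a) (?C 2) k) {0..1}"
    by (rule mul_hasint) (rule coord_hasint)
  have i3: "((\<lambda>t. mul (elt n b) (\<lambda>s. W t s * of_real (Dr 3 t)) k) has_integral mul (elt n b) (?C 3) k) {0..1}"
    by (rule mul_hasint) (rule coord_hasint)
  have all: "((\<lambda>t. (if k \<in> {1..n} then W t k * of_real (Dr 1 t) else 0) + mul (elt n a) (\<lambda>s. W t s * of_real (Dr 2 t)) k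
      + mul (elt n b) (\<lambda>s. W t s * of_real (Dr 3 t)) k) has_integral
      alg_line_integral m n Ups u a b (circ R p q) (\<lambda>P. A_inv m n Ups u (zeta3 m n a b P)) k) {0..1}"
    unfolding alg_line_integral_def by (intro has_integral_add i1 i2 i3)
  show ?thesis
  proof (rule has_integral_cong[THEN iffD1, OF _ all])
    fix t :: real assume t: "t \<in> {0..1}"
    have ea: "A_elem n (elt n a)" "A_elem n (elt n b)" by (auto simp: A_elem_def elt_def)
    have "mul (W t) (\<lambda>s. xid s t) k = of_real (Dr 1 t) * mul (W t) (A_one m) k
       + of_real (Dr 2 t) * mul (W t) (elt n a) k + of_real (Dr 3 t) * mul (W t) (elt n b) k"
      unfolding xid_def by (rule mul_lin3)
    also have "\<dots> = of_real (Dr 1 t) * W t k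
       + of_real (Dr 2 t) * mul (elt n a) (W t) k + of_real (Dr 3 t) * mul (elt n b) (W t) k"
      using W_elem[OF t] mul_one comm ea by simp
    also have "\<dots> = (if k \<in> {1..n} then W t k * of_real (Dr 1 t) else 0) + mul (elt n a) (\<lambda>s. W t s * of_real (Dr 2 t)) k
      + mul (elt n b) (\<lambda>s. W t s * of_real (Dr 3 t)) k"
      using W_elem[OF t] by (auto simp: mul_scal A_elem_def)
    finally show "(if k \<in> {1..n} then W t k * of_real (Dr 1 t) else 0) + mul (elt n a) (\<lambda>s. W t s * of_real (Dr 2 t)) k
      + mul (elt n b) (\<lambda>s. W t s * of_real (Dr 3 t)) k = mul (W t) (\<lambda>s. xid s t) k" by simp
  qed
qed


lemma xid_zero: "m < k \<Longrightarrow> a k = 0 \<Longrightarrow> b k = 0 \<Longrightarrow> xid k t = 0"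
  by (simp add: xid_def A_one_def elt_def)

lemma xi_zero: "m < k \<Longrightarrow> a k = 0 \<Longrightarrow> b k = 0 \<Longrightarrow> xi k t = 0"
  by (simp add: xi_eq A_one_def elt_def)

lemma xid_m1: "xid (m+1) t = 0"
  using h1 by (intro xid_zero) auto

lemma Wv:
  assumes t: "t \<in> {0..1}"
  shows "\<And>j. j \<in> {1..m} \<Longrightarrow> W t j = 1 / xi j t"
    and "W t (m+1) = 0"
    and "W t (m+2) = - xi (m+2) t / xi (u (m+2)) t ^ 2"
    and "W t (m+3) = - xi (m+3) t / xi (u (m+3)) t ^ 2 + xi (m+2) t ^ 2 * Ups (m+2) (m+2) (m+3) / (xi (u (m+2)) t ^ 2 * xi (u (m+3)) t)"
    and "W t (m+4) = - xi (m+4) t / xi (u (m+4)) t ^ 2 - (xi (m+2) t * W t (m+2) * Ups (m+2) (m+2) (m+4) + xi (m+2) t * W t (m+3) * Ups (m+2) (m+3) (m+4)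
            + xi (m+3) t * W t (m+2) * Ups (m+3) (m+2) (m+4) + xi (m+3) t * W t (m+3) * Ups (m+3) (m+3) (m+4)) / xi (u (m+4)) t"
  by (auto simp: W_eq[OF t] winv_def Let_def)

lemma Iexp:
  assumes t: "t \<in> {0..1}"
  shows "mul (W t) (\<lambda>s. xid s t) (m+1) = 0"
    and "mul (W t) (\<lambda>s. xid s t) (m+2) = xid (m+2) t / xi (u (m+2)) t + W t (m+2) * xid (u (m+2)) t"
    and "mul (W t) (\<lambda>s. xid s t) (m+3) = xid (m+3) t / xi (u (m+3)) t + W t (m+3) * xid (u (m+3)) t
           + W t (m+2) * xid (m+2) t * Ups (m+2) (m+2) (m+3)"
    and "mul (W t) (\<lambda>s. xid s t) (m+4) = xid (m+4) t / xi (u (m+4)) t + W t (m+4) * xid (u (m+4)) t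
           + (W t (m+2) * xid (m+2) t * Ups (m+2) (m+2) (m+4) + W t (m+2) * xid (m+3) t * Ups (m+2) (m+3) (m+4)
            + W t (m+3) * xid (m+2) t * Ups (m+3) (m+2) (m+4) + W t (m+3) * xid (m+3) t * Ups (m+3) (m+3) (m+4))"
proof -
  have c: "u (m+1) \<in> {1..m}" "u (m+2) \<in> {1..m}" "u (m+3) \<in> {1..m}" "u (m+4) \<in> {1..m}" by (rule cr)+
  have mh: "mul (W t) (\<lambda>s. xid s t) (m+j) = W t (u(m+j)) * xid (m+j) t + W t (m+j) * xid (u (m+j)) t
     + (\<Sum>r\<in>{m<..<m+j}. \<Sum>s\<in>{m<..<m+j}. W t r * xid s t * Ups r s (m+j))" if "j \<in> {1..4}" for j
    by (rule mulhi) (use that dim in auto)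
  note w1 = Wv(2)[OF t] and wc = Wv(1)[OF t]
  show "mul (W t) (\<lambda>s. xid s t) (m+1) = 0"
    using mh[of 1] xid_m1[of t] w1 unfolding ival1 by simp
  show "mul (W t) (\<lambda>s. xid s t) (m+2) = xid (m+2) t / xi (u (m+2)) t + W t (m+2) * xid (u (m+2)) t"
    using mh[of 2] xid_m1[of t] w1 unfolding ival2 wc[OF c(2)] by simp
  show "mul (W t) (\<lambda>s. xid s t) (m+3) = xid (m+3) t / xi (u (m+3)) t + W t (m+3) * xid (u (m+3)) t
           + W t (m+2) * xid (m+2) t * Ups (m+2) (m+2) (m+3)"
    using mh[of 3] xid_m1[of t] w1 unfolding ival3 wc[OF c(3)] by simp
  show "mul (W t) (\<lambda>s. xid s t) (m+4) = xid (m+4) t / xi (u (m+4)) t + W t (m+4) * xid (u (m+4)) t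
           + (W t (m+2) * xid (m+2) t * Ups (m+2) (m+2) (m+4) + W t (m+2) * xid (m+3) t * Ups (m+2) (m+3) (m+4)
            + W t (m+3) * xid (m+2) t * Ups (m+3) (m+2) (m+4) + W t (m+3) * xid (m+3) t * Ups (m+3) (m+3) (m+4))"
    using mh[of 4] xid_m1[of t] w1 unfolding ival4 wc[OF c(4)] by (simp add: algebra_simps)
qed


lemma nzc: "t \<in> {0..1} \<Longrightarrow> xi (u (m+j)) t \<noteq> 0" if "j \<in> {1..4}"
  using xi_nz urng[of "m+j"] that dim by auto

lemma per: "(\<lambda>t. xi k t) 1 = (\<lambda>t. xi k t) 0" using xi_per by simp

lemma caseA:
  assumes A: "a (m+2) = 0" "b (m+2) = 0" and j: "j \<in> {1..4}"
  shows "((\<lambda>t. mul (W t) (\<lambda>s. xid s t) (m+j)) has_integral 0) {0..1}"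
proof -
  have z2: "xi (m+2) t = 0" "xid (m+2) t = 0" for t using A by (auto intro: xi_zero xid_zero)
  have c34: "Ups (m+3) (m+3) (m+4) \<noteq> 0 \<Longrightarrow> u (m+3) = u (m+4)"
    by (rule Ups_assoc) (use dim in auto)
  consider "j = 1" | "j = 2" | "j = 3" | "j = 4" using j by force
  then show ?thesis
  proof cases
    case 1
    show ?thesis unfolding 1
      by (rule has_integral_cong[THEN iffD2, OF _ has_integral_0]) (rule Iexp(1), simp)
  next
    case 2
    show ?thesis unfolding 2
    proof (rule has_integral_cong[THEN iffD2, OF _ has_integral_0])
      fix t :: real assume t: "t \<in> {0..1}"
      show "mul (W t) (\<lambda>s. xid s t) (m+2) = 0" unfolding Iexp(2)[OF t] Wv(3)[OF t] z2 by simp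
    qed
  next
    case 3
    let ?F = "\<lambda>t. xi (m+3) t / xi (u (m+3)) t"
    show ?thesis unfolding 3
    proof (rule ftc0[of ?F])
      fix t :: real assume t: "t \<in> {0..1}"
      note nz = nzc[of 3 t] nzc[of 4 t]
      show "(?F has_vector_derivative mul (W t) (\<lambda>s. xid s t) (m + 3)) (at t within {0..1})"
      proof (rule has_vector_derivative_eq_rhs)
        show "(?F has_vector_derivative ((xid (m+3) t * xi (u (m+3)) t - xi (m+3) t * xid (u (m+3)) t) / (xi (u (m+3)) t * xi (u (m+3)) t))) (at t within {0..1})"
          by (intro vd_div xi_deriv) (use nz t in auto)
        show "(xid (m+3) t * xi (u (m+3)) t - xi (m+3) t * xid (u (m+3)) t) / (xi (u (m+3)) t * xi (u (m+3)) t) = mul (W t) (\<lambda>s. xid s t) (m + 3)"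
          using nz t unfolding Iexp(3)[OF t] Wv(4)[OF t] Wv(3)[OF t] z2 by (simp add: field_simps power2_eq_square)
      qed
    qed (simp add: xi_per)
  next
    case 4
    let ?U = "Ups (m+3) (m+3) (m+4)"
    let ?q = "\<lambda>t. xi (m+3) t / xi (u (m+4)) t"
    let ?F = "\<lambda>t. xi (m+4) t / xi (u (m+4)) t - (?U/2) * (?q t * ?q t)"
    show ?thesis unfolding 4
    proof (rule ftc0[of ?F])
      fix t :: real assume t: "t \<in> {0..1}"
      note nz = nzc[of 3 t] nzc[of 4 t]
      let ?s = "xi (u (m+4)) t" and ?s' = "xid (u (m+4)) t"
      let ?qd = "(xid (m+3) t * ?s - xi (m+3) t * ?s') / (?s * ?s)"
      show "(?F has_vector_derivative mul (W t) (\<lambda>s. xid s t) (m + 4)) (at t within {0..1})"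
      proof (rule has_vector_derivative_eq_rhs)
        show "(?F has_vector_derivative ((xid (m+4) t * ?s - xi (m+4) t * ?s') / (?s * ?s)
            - (?U/2) * (?q t * ?qd + ?qd * ?q t))) (at t within {0..1})"
          by (intro has_vector_derivative_diff has_vector_derivative_mult_right has_vector_derivative_mult vd_div xi_deriv) (use nz t in auto)
        show "(xid (m+4) t * ?s - xi (m+4) t * ?s') / (?s * ?s)
            - (?U/2) * (?q t * ?qd + ?qd * ?q t) = mul (W t) (\<lambda>s. xid s t) (m + 4)"
        proof (cases "?U = 0")
          case True
          then show ?thesis using nz t unfolding Iexp(4)[OF t] Wv(5)[OF t] Wv(4)[OF t] Wv(3)[OF t] z2
            by (simp add: field_simps power2_eq_square)
        next
          case False
          then have e: "u (m+3) = u (m+4)" by (rule c34)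
          show ?thesis using nz t unfolding Iexp(4)[OF t] Wv(5)[OF t] Wv(4)[OF t] Wv(3)[OF t] z2 e
            by (simp add: field_simps power2_eq_square)
        qed
      qed
    qed (simp add: xi_per)
  qed
qed


lemma caseB:
  assumes B: "a (m+3) = 0" "b (m+3) = 0" and j: "j \<in> {1..4}"
  shows "((\<lambda>t. mul (W t) (\<lambda>s. xid s t) (m+j)) has_integral 0) {0..1}"
proof -
  have z3: "xi (m+3) t = 0" "xid (m+3) t = 0" for t using B by (auto intro: xi_zero xid_zero)
  have c23: "Ups (m+2) (m+2) (m+3) \<noteq> 0 \<Longrightarrow> u (m+2) = u (m+3)"
    by (rule Ups_assoc) (use dim in auto)
  have c24: "Ups (m+2) (m+2) (m+4) \<noteq> 0 \<Longrightarrow> u (m+2) = u (m+4)"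
    by (rule Ups_assoc) (use dim in auto)
  have c234: "Ups (m+2) (m+3) (m+4) \<noteq> 0 \<Longrightarrow> u (m+2) = u (m+4)"
    by (rule Ups_assoc) (use dim in auto)
  have cm: "Ups (m+3) (m+2) (m+4) = Ups (m+2) (m+3) (m+4)"
    by (rule Ups_comm) (use dim in auto)
  consider "j = 1" | "j = 2" | "j = 3" | "j = 4" using j by force
  then show ?thesis
  proof cases
    case 1
    show ?thesis unfolding 1
      by (rule has_integral_cong[THEN iffD2, OF _ has_integral_0]) (rule Iexp(1), simp)
  next
    case 2
    let ?F = "\<lambda>t. xi (m+2) t / xi (u (m+2)) t"
    show ?thesis unfolding 2
    proof (rule ftc0[of ?F])
      fix t :: real assume t: "t \<in> {0..1}"
      note nz = nzc[of 2 t]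
      show "(?F has_vector_derivative mul (W t) (\<lambda>s. xid s t) (m + 2)) (at t within {0..1})"
      proof (rule has_vector_derivative_eq_rhs)
        show "(?F has_vector_derivative ((xid (m+2) t * xi (u (m+2)) t - xi (m+2) t * xid (u (m+2)) t) / (xi (u (m+2)) t * xi (u (m+2)) t))) (at t within {0..1})"
          by (intro vd_div xi_deriv) (use nz t in auto)
        show "(xid (m+2) t * xi (u (m+2)) t - xi (m+2) t * xid (u (m+2)) t) / (xi (u (m+2)) t * xi (u (m+2)) t) = mul (W t) (\<lambda>s. xid s t) (m + 2)"
          using nz t unfolding Iexp(2)[OF t] Wv(3)[OF t] by (simp add: field_simps power2_eq_square)
      qed
    qed (simp add: xi_per)
  next
    case 3
    let ?U = "Ups (m+2) (m+2) (m+3)"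
    let ?q = "\<lambda>t. xi (m+2) t / xi (u (m+3)) t"
    let ?F = "\<lambda>t. - (?U/2) * (?q t * ?q t)"
    show ?thesis unfolding 3
    proof (rule ftc0[of ?F])
      fix t :: real assume t: "t \<in> {0..1}"
      note nz = nzc[of 2 t] nzc[of 3 t]
      let ?s = "xi (u (m+3)) t" and ?s' = "xid (u (m+3)) t"
      let ?qd = "(xid (m+2) t * ?s - xi (m+2) t * ?s') / (?s * ?s)"
      show "(?F has_vector_derivative mul (W t) (\<lambda>s. xid s t) (m + 3)) (at t within {0..1})"
      proof (rule has_vector_derivative_eq_rhs)
        show "(?F has_vector_derivative (- (?U/2) * (?q t * ?qd + ?qd * ?q t))) (at t within {0..1})"
          by (intro has_vector_derivative_mult_right has_vector_derivative_mult vd_div xi_deriv) (use nz t in auto)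
        show "- (?U/2) * (?q t * ?qd + ?qd * ?q t) = mul (W t) (\<lambda>s. xid s t) (m + 3)"
        proof (cases "?U = 0")
          case True
          then show ?thesis using nz t unfolding Iexp(3)[OF t] Wv(4)[OF t] Wv(3)[OF t] z3
            by (simp add: field_simps power2_eq_square)
        next
          case False
          then have e: "u (m+2) = u (m+3)" by (rule c23)
          show ?thesis using nz t unfolding Iexp(3)[OF t] Wv(4)[OF t] Wv(3)[OF t] z3 e
            by (simp add: field_simps power2_eq_square)
        qed
      qed
    qed (simp add: xi_per)
  next
    case 4
    let ?U = "Ups (m+2) (m+2) (m+4)" and ?V = "Ups (m+2) (m+2) (m+3) * Ups (m+2) (m+3) (m+4)"
    let ?q = "\<lambda>t. xi (m+2) t / xi (u (m+4)) t"
    let ?F = "\<lambda>t. xi (m+4) t / xi (u (m+4)) t - (?U/2) * (?q t * ?q t) + (?V/3) * (?q t * ?q t * ?q t)"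
    show ?thesis unfolding 4
    proof (rule ftc0[of ?F])
      fix t :: real assume t: "t \<in> {0..1}"
      note nz = nzc[of 2 t] nzc[of 3 t] nzc[of 4 t]
      let ?s = "xi (u (m+4)) t" and ?s' = "xid (u (m+4)) t"
      let ?qd = "(xid (m+2) t * ?s - xi (m+2) t * ?s') / (?s * ?s)"
      let ?D = "(xid (m+4) t * ?s - xi (m+4) t * ?s') / (?s * ?s)
            - (?U/2) * (?q t * ?qd + ?qd * ?q t) + (?V/3) * (?q t * ?q t * ?qd + (?q t * ?qd + ?qd * ?q t) * ?q t)"
      show "(?F has_vector_derivative mul (W t) (\<lambda>s. xid s t) (m + 4)) (at t within {0..1})"
      proof (rule has_vector_derivative_eq_rhs)
        show "(?F has_vector_derivative ?D) (at t within {0..1})"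
          by (intro has_vector_derivative_add has_vector_derivative_diff has_vector_derivative_mult_right has_vector_derivative_mult vd_div xi_deriv) (use nz t in auto)
        have i4: "mul (W t) (\<lambda>s. xid s t) (m + 4) = xid (m+4) t / ?s + W t (m+4) * ?s'
           + (W t (m+2) * xid (m+2) t * ?U + W t (m+3) * xid (m+2) t * Ups (m+2) (m+3) (m+4))"
          unfolding Iexp(4)[OF t] z3 cm by simp
        have w4: "W t (m+4) = - xi (m+4) t / ?s ^ 2 - (xi (m+2) t * W t (m+2) * ?U + xi (m+2) t * W t (m+3) * Ups (m+2) (m+3) (m+4)) / ?s"
          unfolding Wv(5)[OF t] z3 by simp
        have w3: "W t (m+3) = xi (m+2) t ^ 2 * Ups (m+2) (m+2) (m+3) / (xi (u (m+2)) t ^ 2 * xi (u (m+3)) t)"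
          unfolding Wv(4)[OF t] z3 by simp
        note w2 = Wv(3)[OF t]
        show "?D = mul (W t) (\<lambda>s. xid s t) (m + 4)"
        proof (cases "?U = 0")
          case U: True
          consider "Ups (m+2) (m+2) (m+3) = 0" | "Ups (m+2) (m+3) (m+4) = 0"
            | "Ups (m+2) (m+2) (m+3) \<noteq> 0" "Ups (m+2) (m+3) (m+4) \<noteq> 0" by blast
          then show ?thesis
          proof cases
            case 1 then show ?thesis using nz t U unfolding i4 w4 w3 w2
              by (simp add: field_simps power2_eq_square)
          next
            case 2 then show ?thesis using nz t U unfolding i4 w4 w3 w2
              by (simp add: field_simps power2_eq_square)
          next
            case 3
            then have e: "u (m+2) = u (m+4)" "u (m+3) = u (m+4)" using c23 c234 by auto
            show ?thesis using nz t U unfolding i4 w4 w3 w2 e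
              by (simp add: field_simps power2_eq_square)
          qed
        next
          case U: False
          then have e0: "u (m+2) = u (m+4)" by (rule c24)
          consider "Ups (m+2) (m+2) (m+3) = 0" | "Ups (m+2) (m+3) (m+4) = 0"
            | "Ups (m+2) (m+2) (m+3) \<noteq> 0" "Ups (m+2) (m+3) (m+4) \<noteq> 0" by blast
          then show ?thesis
          proof cases
            case 1 then show ?thesis using nz t U unfolding i4 w4 w3 w2 e0
              by (simp add: field_simps power2_eq_square)
          next
            case 2 then show ?thesis using nz t U unfolding i4 w4 w3 w2 e0
              by (simp add: field_simps power2_eq_square)
          next
            case 3
            then have e: "u (m+3) = u (m+4)" using c23 c234 by auto
            show ?thesis using nz t U unfolding i4 w4 w3 w2 e e0
              by (simp add: field_simps power2_eq_square)
          qed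
        qed
      qed
    qed (simp add: xi_per)
  qed
qed


lemma main:
  assumes h2: "(a (m+2) = 0 \<and> b (m+2) = 0) \<or> (a (m+3) = 0 \<and> b (m+3) = 0)"
  shows "alg_line_integral m n Ups u a b (circ R p q) (\<lambda>P. A_inv m n Ups u (zeta3 m n a b P))
           = (\<lambda>k. 2 * of_real pi * \<i> * A_one m k)"
proof
  fix k
  have L: "((\<lambda>t. mul (W t) (\<lambda>s. xid s t) k) has_integral
      alg_line_integral m n Ups u a b (circ R p q) (\<lambda>P. A_inv m n Ups u (zeta3 m n a b P)) k) {0..1}"
    by (rule line_int)
  have Rr: "((\<lambda>t. mul (W t) (\<lambda>s. xid s t) k) has_integral (2 * of_real pi * \<i> * A_one m k)) {0..1}"
  proof -
    have "k \<in> {1..m} \<or> (\<exists>j\<in>{1..4}. k = m + j) \<or> k = 0 \<or> n < k"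
    proof (cases "k = 0 \<or> n < k")
      case False
      show ?thesis
      proof (cases "k \<le> m")
        case True then show ?thesis using False by auto
      next
        case F2: False
        have "k - m \<in> {1..4}" "k = m + (k - m)" using False F2 dim by auto
        then show ?thesis by blast
      qed
    qed auto
    then consider "k \<in> {1..m}" | "\<exists>j\<in>{1..4}. k = m + j" | "k = 0 \<or> n < k" by blast
    then show ?thesis
    proof cases
      case 1
      have "((\<lambda>t. xid k t / xi k t) has_integral (2*pi*\<i>)) {0..1}" by (rule wind[OF 1])
      then have "((\<lambda>t. mul (W t) (\<lambda>s. xid s t) k) has_integral (2*pi*\<i>)) {0..1}"
      proof (rule has_integral_cong[THEN iffD1, rotated])
        fix t :: real assume t: "t \<in> {0..1}"
        show "xid k t / xi k t = mul (W t) (\<lambda>s. xid s t) k"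
          using 1 by (simp add: mullo Wv(1)[OF t 1])
      qed
      then show ?thesis using 1 by (simp add: A_one_def)
    next
      case 2
      then obtain j where j: "j \<in> {1..4}" "k = m + j" by blast
      have "((\<lambda>t. mul (W t) (\<lambda>s. xid s t) (m+j)) has_integral 0) {0..1}"
        using h2 caseA[OF _ _ j(1)] caseB[OF _ _ j(1)] by blast
      then show ?thesis using j by (simp add: A_one_def)
    next
      case 3
      then have "((\<lambda>t. mul (W t) (\<lambda>s. xid s t) k) has_integral 0) {0..1}"
        by (simp add: mulout)
      then show ?thesis using 3 mn by (auto simp: A_one_def)
    qed
  qed
  show "alg_line_integral m n Ups u a b (circ R p q) (\<lambda>P. A_inv m n Ups u (zeta3 m n a b P)) k
      = 2 * of_real pi * \<i> * A_one m k"
    using has_integral_unique[OF L Rr] .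
qed

end

theorem theorem10:
  fixes m n :: nat and Ups :: "nat \<Rightarrow> nat \<Rightarrow> nat \<Rightarrow> complex" and u :: "nat \<Rightarrow> nat"
    and a b :: "nat \<Rightarrow> complex"
  assumes alg: "is_Anm m n Ups u"
    and std: "standing_assms m n a b"
    and dimN: "n - m = 4"
    and h1: "a (m+1) = 0 \<and> b (m+1) = 0"
    and h2: "(a (m+2) = 0 \<and> b (m+2) = 0) \<or> (a (m+3) = 0 \<and> b (m+3) = 0)"
  shows "\<forall>R p q. admissible_circle m n a b R p q \<longrightarrow>
           alg_line_integral m n Ups u a b (circ R p q)
              (\<lambda>P. A_inv m n Ups u (zeta3 m n a b P))
           = (\<lambda>k. 2 * of_real pi * \<i> * A_one m k)"
proof (intro allI impI)
  fix R p q assume adm: "admissible_circle m n a b R p q"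
  have mn: "m \<le> n" using alg unfolding is_Anm_def by auto
  then have d: "n = m + 4" using dimN by simp
  interpret circ_set m n Ups u a b R p q
    by unfold_locales (use alg d adm h1 in auto)
  show "alg_line_integral m n Ups u a b (circ R p q) (\<lambda>P. A_inv m n Ups u (zeta3 m n a b P))
           = (\<lambda>k. 2 * of_real pi * \<i> * A_one m k)"
    by (rule main[OF h2])
qed

end
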